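(* Let $\mathcal{A}$ be any simply closed set of Left dead-ends. Then $\mathcal{D}(\mathcal{A})\cap\mathcal{L}=\mathcal{A}$.
   Context: Games are finite partizan games. A universe is a set of games closed under options, disjunctive sums, conjugates, and forming $\{\mathscr{G}^L\mid\mathscr{G}^R\}$ from nonempty finite subsets of it; $\mathcal{D}(\mathcal{A})$ is the smallest universe containing $\mathcal{A}$. A set is simply closed if it is closed under taking options and under disjunctive sums. A Left dead-end is a game all of whose subpositions have no Left option; $\mathcal{L}$ is the set of Left dead-ends. *)

theory Defs
  imports Main "HOL-Library.FSet"
begin

text \<open>Finite partizan game forms: a game is given by its finite sets of Left
and Right options.  Games are identified as forms (literal equality).\<close>

datatype game = Game (leftOpts: "game fset") (rightOpts: "game fset")

definition isOption :: "game \<Rightarrow> game \<Rightarrow> bool" where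
  "isOption x g \<longleftrightarrow> x |\<in>| leftOpts g \<or> x |\<in>| rightOpts g"

lemma size_mem_le:
  "x \<in> fset L \<Longrightarrow> Suc (size x) \<le> (\<Sum>y\<in>fset L. Suc (size (y::game)))"
  by (rule member_le_sum[of x "fset L" "\<lambda>y. Suc (size y)"]) auto

lemma size_opt_less:
  "x |\<in>| L \<Longrightarrow> size x < size (Game L R)"
  "x |\<in>| R \<Longrightarrow> size x < size (Game L R)"
  using size_mem_le[of x L] size_mem_le[of x R] by auto

function conjugate :: "game \<Rightarrow> game" where
  "conjugate (Game L R) = Game (fimage conjugate R) (fimage conjugate L)"
  by pat_completeness auto
termination
  by (relation "measure size") (auto dest: size_opt_less)

function (sequential) gsum :: "game \<Rightarrow> game \<Rightarrow> game" where
  "gsum (Game L R) (Game L' R') =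
     Game ((\<lambda>x. gsum x (Game L' R')) |`| L |\<union>| (\<lambda>y. gsum (Game L R) y) |`| L')
          ((\<lambda>x. gsum x (Game L' R')) |`| R |\<union>| (\<lambda>y. gsum (Game L R) y) |`| R')"
  by pat_completeness auto
termination
  by (relation "measure (\<lambda>(g, h). size g + size h)") (auto dest: size_opt_less)

definition isSubposition :: "game \<Rightarrow> game \<Rightarrow> bool" where
  "isSubposition h g \<longleftrightarrow> isOption\<^sup>*\<^sup>* h g"

definition leftDeadEnd :: "game \<Rightarrow> bool" where
  "leftDeadEnd g \<longleftrightarrow> (\<forall>h. isSubposition h g \<longrightarrow> leftOpts h = {||})"

definition LeftDeadEnds :: "game set" where
  "LeftDeadEnds = {g. leftDeadEnd g}"

definition closedUnderOptions :: "game set \<Rightarrow> bool" where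
  "closedUnderOptions S \<longleftrightarrow> (\<forall>g\<in>S. \<forall>x. isOption x g \<longrightarrow> x \<in> S)"

definition closedUnderSums :: "game set \<Rightarrow> bool" where
  "closedUnderSums S \<longleftrightarrow> (\<forall>g\<in>S. \<forall>h\<in>S. gsum g h \<in> S)"

definition closedUnderConjugates :: "game set \<Rightarrow> bool" where
  "closedUnderConjugates S \<longleftrightarrow> (\<forall>g\<in>S. conjugate g \<in> S)"

definition simplyClosed :: "game set \<Rightarrow> bool" where
  "simplyClosed S \<longleftrightarrow> closedUnderOptions S \<and> closedUnderSums S"

definition universe :: "game set \<Rightarrow> bool" where
  "universe U \<longleftrightarrow> closedUnderOptions U \<and> closedUnderSums U \<and> closedUnderConjugates U \<and>
     (\<forall>L R. L \<noteq> {||} \<longrightarrow> R \<noteq> {||} \<longrightarrow> fset L \<subseteq> U \<longrightarrow> fset R \<subseteq> U \<longrightarrow> Game L R \<in> U)"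

definition universeClosure :: "game set \<Rightarrow> game set" where
  "universeClosure A = \<Inter>{U. universe U \<and> A \<subseteq> U}"

end

theory Submission
  imports Defs
begin

definition rightDeadEnd :: "game \<Rightarrow> bool" where
  "rightDeadEnd g \<longleftrightarrow> (\<forall>h. isSubposition h g \<longrightarrow> rightOpts h = {||})"

lemma conj_conj[simp]: "conjugate (conjugate g) = g"
proof (induction g)
  case (Game L R)
  have a: "fimage conjugate (fimage conjugate L) = L"
    using Game(1) by (simp add: fset.map_comp fset.map_ident_strong)
  have b: "fimage conjugate (fimage conjugate R) = R"
    using Game(2) by (simp add: fset.map_comp fset.map_ident_strong)
  show ?case using a b by simp
qed

lemma conj_opts:
  "leftOpts (conjugate g) = conjugate |`| rightOpts g"
  "rightOpts (conjugate g) = conjugate |`| leftOpts g"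
  by (cases g; simp)+

lemma isOption_conj: "isOption x (conjugate g) \<longleftrightarrow> (\<exists>y. isOption y g \<and> x = conjugate y)"
  unfolding isOption_def conj_opts by auto

lemma sub_conj:
  assumes "isOption\<^sup>*\<^sup>* x (conjugate g)"
  shows "\<exists>y. isOption\<^sup>*\<^sup>* y g \<and> x = conjugate y"
  using assms
proof (induction rule: converse_rtranclp_induct)
  case base
  then show ?case by auto
next
  case (step y z)
  then obtain z' where z': "isOption\<^sup>*\<^sup>* z' g" "z = conjugate z'" by auto
  with step(1) obtain y' where y': "isOption y' z'" "y = conjugate y'"
    using isOption_conj by auto
  have "isOption\<^sup>*\<^sup>* y' g" using y'(1) z'(1) by (rule converse_rtranclp_into_rtranclp)
  then show ?case using y'(2) by blast
qed

lemma sub_conj2: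
  assumes "isOption\<^sup>*\<^sup>* x g"
  shows "isOption\<^sup>*\<^sup>* (conjugate x) (conjugate g)"
  using assms
proof (induction rule: converse_rtranclp_induct)
  case base
  then show ?case by auto
next
  case (step y z)
  then have "isOption (conjugate y) (conjugate z)" using isOption_conj by auto
  then show ?case using step by (meson converse_rtranclp_into_rtranclp)
qed

lemma leftDE_conj: "leftDeadEnd (conjugate h) \<longleftrightarrow> rightDeadEnd h"
  unfolding leftDeadEnd_def rightDeadEnd_def isSubposition_def
  by (metis conj_opts(1) fimage_is_fempty sub_conj sub_conj2)

lemma rightDE_conj: "rightDeadEnd (conjugate h) \<longleftrightarrow> leftDeadEnd h"
  using leftDE_conj[of "conjugate h"] by simp

lemma gsum_opts:
  "leftOpts (gsum g h) = (\<lambda>x. gsum x h) |`| leftOpts g |\<union>| (\<lambda>y. gsum g y) |`| leftOpts h"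
  "rightOpts (gsum g h) = (\<lambda>x. gsum x h) |`| rightOpts g |\<union>| (\<lambda>y. gsum g y) |`| rightOpts h"
  by (cases g; cases h; simp)+

lemma isOption_gsum: "isOption x (gsum g h) \<longleftrightarrow>
   (\<exists>g'. isOption g' g \<and> x = gsum g' h) \<or> (\<exists>h'. isOption h' h \<and> x = gsum g h')"
  unfolding isOption_def gsum_opts by auto

lemma sub_gsum:
  assumes "isOption\<^sup>*\<^sup>* x (gsum g h)"
  shows "\<exists>g' h'. isOption\<^sup>*\<^sup>* g' g \<and> isOption\<^sup>*\<^sup>* h' h \<and> x = gsum g' h'"
  using assms
proof (induction rule: converse_rtranclp_induct)
  case base
  then show ?case by auto
next
  case (step y z)
  then obtain g' h' where z: "isOption\<^sup>*\<^sup>* g' g" "isOption\<^sup>*\<^sup>* h' h" "z = gsum g' h'" by auto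
  with step(1) have "(\<exists>g''. isOption g'' g' \<and> y = gsum g'' h') \<or> (\<exists>h''. isOption h'' h' \<and> y = gsum g' h'')"
    using isOption_gsum by auto
  then show ?case
  proof
    assume "\<exists>g''. isOption g'' g' \<and> y = gsum g'' h'"
    then obtain g'' where "isOption g'' g'" "y = gsum g'' h'" by blast
    moreover have "isOption\<^sup>*\<^sup>* g'' g" using calculation(1) z(1) by (rule converse_rtranclp_into_rtranclp)
    ultimately show ?thesis using z(2) by blast
  next
    assume "\<exists>h''. isOption h'' h' \<and> y = gsum g' h''"
    then obtain h'' where "isOption h'' h'" "y = gsum g' h''" by blast
    moreover have "isOption\<^sup>*\<^sup>* h'' h" using calculation(1) z(2) by (rule converse_rtranclp_into_rtranclp)
    ultimately show ?thesis using z(1) by blast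
  qed
qed

lemma sub_gsum_l:
  assumes "isOption\<^sup>*\<^sup>* x g"
  shows "isOption\<^sup>*\<^sup>* (gsum x h) (gsum g h)"
  using assms
proof (induction rule: converse_rtranclp_induct)
  case base
  then show ?case by auto
next
  case (step y z)
  then have "isOption (gsum y h) (gsum z h)" using isOption_gsum by auto
  then show ?case using step by (meson converse_rtranclp_into_rtranclp)
qed

lemma sub_gsum_r:
  assumes "isOption\<^sup>*\<^sup>* x h"
  shows "isOption\<^sup>*\<^sup>* (gsum g x) (gsum g h)"
  using assms
proof (induction rule: converse_rtranclp_induct)
  case base
  then show ?case by auto
next
  case (step y z)
  then have "isOption (gsum g y) (gsum g z)" using isOption_gsum by auto
  then show ?case using step by (meson converse_rtranclp_into_rtranclp)
qed

lemma leftDE_gsum: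
  assumes "leftDeadEnd (gsum a b)"
  shows "leftDeadEnd a" "leftDeadEnd b"
  using assms unfolding leftDeadEnd_def isSubposition_def
  by (metis sub_gsum_l gsum_opts(1) funion_fempty_left funion_fempty_right fimage_is_fempty
      sup_eq_bot_iff bot_fset_def, 
      metis sub_gsum_r gsum_opts(1) fimage_is_fempty sup_eq_bot_iff bot_fset_def)

lemma rightDE_gsum:
  assumes "rightDeadEnd (gsum a b)"
  shows "rightDeadEnd a" "rightDeadEnd b"
  using assms unfolding rightDeadEnd_def isSubposition_def
  by (metis sub_gsum_l gsum_opts(2) fimage_is_fempty sup_eq_bot_iff bot_fset_def, 
      metis sub_gsum_r gsum_opts(2) fimage_is_fempty sup_eq_bot_iff bot_fset_def)

lemma conj_gsum: "conjugate (gsum a b) = gsum (conjugate a) (conjugate b)"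
proof (induction a b rule: gsum.induct)
  case (1 L R L' R')
  let ?G = "Game L R" and ?G' = "Game L' R'"
  have e: "conjugate |`| ((\<lambda>x. gsum x ?G') |`| X) = (\<lambda>x. gsum x (conjugate ?G')) |`| (conjugate |`| X)"
    if "X = L \<or> X = R" for X
    unfolding fset.map_comp by (rule fimage_cong) (use 1 that in auto)
  have f: "conjugate |`| ((\<lambda>x. gsum ?G x) |`| X) = (\<lambda>x. gsum (conjugate ?G) x) |`| (conjugate |`| X)"
    if "X = L' \<or> X = R'" for X
    unfolding fset.map_comp by (rule fimage_cong) (use 1 that in auto)
  show ?case
    using e[of L] e[of R] f[of L'] f[of R'] by (simp add: fimage_funion)
qed

definition UU :: "game set \<Rightarrow> game set" where
  "UU A = {g. \<forall>h. isOption\<^sup>*\<^sup>* h g \<longrightarrow> (leftDeadEnd h \<longrightarrow> h \<in> A) \<and> (rightDeadEnd h \<longrightarrow> conjugate h \<in> A)}"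

lemma A_sub_closed:
  assumes "closedUnderOptions A" "isOption\<^sup>*\<^sup>* h g" "g \<in> A"
  shows "h \<in> A"
  using assms(2,3)
proof (induction rule: converse_rtranclp_induct)
  case base then show ?case .
next
  case (step y z)
  then show ?case using assms(1) unfolding closedUnderOptions_def by blast
qed

lemma both_DE:
  assumes "leftDeadEnd h" "rightDeadEnd h"
  shows "h = Game {||} {||}"
proof -
  have "leftOpts h = {||}" "rightOpts h = {||}"
    using assms unfolding leftDeadEnd_def rightDeadEnd_def isSubposition_def by auto
  then show ?thesis by (cases h) auto
qed

lemma conj_zero: "conjugate (Game {||} {||}) = Game {||} {||}" by simp

lemma UU_opts:
  assumes "simplyClosed A"
  shows "closedUnderOptions (UU A)"
    unfolding closedUnderOptions_def UU_def
  proof (intro ballI allI impI CollectI)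
    fix g x h assume g: "g \<in> {g. \<forall>h. isOption\<^sup>*\<^sup>* h g \<longrightarrow> (leftDeadEnd h \<longrightarrow> h \<in> A) \<and> (rightDeadEnd h \<longrightarrow> conjugate h \<in> A)}"
      and x: "isOption x g" and h: "isOption\<^sup>*\<^sup>* h x"
    have "isOption\<^sup>*\<^sup>* h g" using h x by (rule rtranclp.rtrancl_into_rtrancl)
    then show "(leftDeadEnd h \<longrightarrow> h \<in> A) \<and> (rightDeadEnd h \<longrightarrow> conjugate h \<in> A)" using g by blast
  qed

lemma UU_conj:
  assumes "simplyClosed A"
  shows "closedUnderConjugates (UU A)"
    unfolding closedUnderConjugates_def
  proof (intro ballI)
    fix g assume g: "g \<in> UU A"
    show "conjugate g \<in> UU A" unfolding UU_def
    proof (intro CollectI allI impI conjI)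
      fix x assume "isOption\<^sup>*\<^sup>* x (conjugate g)"
      then obtain y where y: "isOption\<^sup>*\<^sup>* y g" "x = conjugate y" using sub_conj by blast
      have yy: "(leftDeadEnd y \<longrightarrow> y \<in> A) \<and> (rightDeadEnd y \<longrightarrow> conjugate y \<in> A)"
        using g y(1) unfolding UU_def by blast
      show "leftDeadEnd x \<Longrightarrow> x \<in> A" using yy y(2) leftDE_conj by simp
      show "rightDeadEnd x \<Longrightarrow> conjugate x \<in> A" using yy y(2) rightDE_conj by simp
    qed
  qed

lemma UU_sums:
  assumes "simplyClosed A"
  shows "closedUnderSums (UU A)"
    unfolding closedUnderSums_def
  proof (intro ballI)
    fix g h assume g: "g \<in> UU A" and h: "h \<in> UU A"
    show "gsum g h \<in> UU A"
      unfolding UU_def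
    proof (intro CollectI allI impI conjI)
      fix x assume "isOption\<^sup>*\<^sup>* x (gsum g h)"
      then obtain g' h' where gh: "isOption\<^sup>*\<^sup>* g' g" "isOption\<^sup>*\<^sup>* h' h" "x = gsum g' h'"
        using sub_gsum by blast
      {
        assume "leftDeadEnd x"
        then have ld: "leftDeadEnd (gsum g' h')" using gh(3) by simp
        have "leftDeadEnd g'" "leftDeadEnd h'" using leftDE_gsum[OF ld] by auto
        then have "g' \<in> A" "h' \<in> A" using g h gh(1,2) unfolding UU_def mem_Collect_eq by blast+
        then have "gsum g' h' \<in> A" using assms unfolding simplyClosed_def closedUnderSums_def by blast
        then show "x \<in> A" using gh(3) by simp
      }
      {
        assume "rightDeadEnd x"
        then have rd: "rightDeadEnd (gsum g' h')" using gh(3) by simp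
        have "rightDeadEnd g'" "rightDeadEnd h'" using rightDE_gsum[OF rd] by auto
        then have "conjugate g' \<in> A" "conjugate h' \<in> A" using g h gh(1,2) unfolding UU_def mem_Collect_eq by blast+
        then have "gsum (conjugate g') (conjugate h') \<in> A" using assms
          unfolding simplyClosed_def closedUnderSums_def by blast
        then show "conjugate x \<in> A" using gh(3) by (simp only: conj_gsum)
      }
    qed
  qed

lemma UU_game:
  assumes L: "L \<noteq> {||}" and R: "R \<noteq> {||}" and LU: "fset L \<subseteq> UU A" and RU: "fset R \<subseteq> UU A"
  shows "Game L R \<in> UU A"
    unfolding UU_def
  proof (intro CollectI allI impI conjI)
    fix x assume x: "isOption\<^sup>*\<^sup>* x (Game L R)"
    have ne: "\<not> leftDeadEnd (Game L R)" "\<not> rightDeadEnd (Game L R)"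
      using L R unfolding leftDeadEnd_def rightDeadEnd_def isSubposition_def
      by (metis game.sel(1) rtranclp.rtrancl_refl, metis game.sel(2) rtranclp.rtrancl_refl)
    have "x = Game L R \<or> (\<exists>y. isOption\<^sup>*\<^sup>* x y \<and> isOption y (Game L R))"
      using x by (cases rule: rtranclp.cases) auto
    then have "(leftDeadEnd x \<longrightarrow> x \<in> A) \<and> (rightDeadEnd x \<longrightarrow> conjugate x \<in> A)"
    proof
      assume "x = Game L R"
      then show ?thesis using ne by simp
    next
      assume "\<exists>y. isOption\<^sup>*\<^sup>* x y \<and> isOption y (Game L R)"
      then obtain y where y: "isOption\<^sup>*\<^sup>* x y" "isOption y (Game L R)" by blast
      then have "y |\<in>| L \<or> y |\<in>| R" unfolding isOption_def by simp
      then have "y \<in> UU A" using LU RU by blast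
      then show ?thesis using y(1) unfolding UU_def mem_Collect_eq by blast
    qed
    then show "leftDeadEnd x \<Longrightarrow> x \<in> A" "rightDeadEnd x \<Longrightarrow> conjugate x \<in> A" by auto
  qed

lemma UU_universe:
  assumes "simplyClosed A"
  shows "universe (UU A)"
  unfolding universe_def using UU_opts[OF assms] UU_conj[OF assms] UU_sums[OF assms] UU_game
  by (intro conjI allI impI) auto

theorem mainTheorem11:
  fixes A :: "game set"
  assumes "simplyClosed A"
    and "A \<subseteq> LeftDeadEnds"
  shows "universeClosure A \<inter> LeftDeadEnds = A"
proof -
  have AU: "A \<subseteq> UU A"
  proof
    fix g assume g: "g \<in> A"
    have "(leftDeadEnd h \<longrightarrow> h \<in> A) \<and> (rightDeadEnd h \<longrightarrow> conjugate h \<in> A)"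
      if h: "isOption\<^sup>*\<^sup>* h g" for h
    proof -
      have hA: "h \<in> A" using A_sub_closed[OF _ h g] assms(1) unfolding simplyClosed_def by blast
      have lh: "leftDeadEnd h" using hA assms(2) unfolding LeftDeadEnds_def by blast
      have "rightDeadEnd h \<longrightarrow> conjugate h \<in> A"
      proof
        assume "rightDeadEnd h"
        then have "h = Game {||} {||}" using both_DE lh by blast
        then show "conjugate h \<in> A" using hA by simp
      qed
      then show ?thesis using hA by blast
    qed
    then show "g \<in> UU A" unfolding UU_def by blast
  qed
  have "universeClosure A \<subseteq> UU A"
    unfolding universeClosure_def using UU_universe[OF assms(1)] AU by blast
  moreover have "UU A \<inter> LeftDeadEnds \<subseteq> A"
  proof
    fix g assume "g \<in> UU A \<inter> LeftDeadEnds"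
    then have "g \<in> UU A" "leftDeadEnd g" unfolding LeftDeadEnds_def by auto
    moreover have "isOption\<^sup>*\<^sup>* g g" by simp
    ultimately show "g \<in> A" unfolding UU_def by blast
  qed
  moreover have "A \<subseteq> universeClosure A" unfolding universeClosure_def by blast
  ultimately show ?thesis using assms(2) by blast
qed

end
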